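(* Let $q$ be a prime number and $\mathbb{A}=\mathbb{Q}\cap\,]0,1[$. Then $\mathbb{A}\text{-}\mathcal{KS}(q^{2})=\emptyset$.
   Context: Every nonzero rational $\alpha$ is written $\alpha=\alpha_1/\alpha_2$ with $\alpha_1\in\mathbb{Z}$, $\alpha_2$ a positive integer and $\gcd(\alpha_1,\alpha_2)=1$. For an integer $N\ge 2$ and a nonzero rational $\alpha=\alpha_1/\alpha_2$, $N$ is called an $\alpha$-Korselt number if $N\neq\alpha$ and $\alpha_2p-\alpha_1$ divides $\alpha_2N-\alpha_1$ (in $\mathbb{Z}$) for every prime divisor $p$ of $N$. For a subset $\mathbb{A}\subseteq\mathbb{Q}$, $\mathbb{A}\text{-}\mathcal{KS}(N)$ denotes the set of all $\beta\in\mathbb{A}\setminus\{0,N\}$ such that $N$ is a $\beta$-Korselt number. $]0,1[$ denotes the open interval. *)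

theory Defs
  imports Complex_Main "HOL-Computational_Algebra.Primes"
begin

definition korselt :: "rat \<Rightarrow> nat \<Rightarrow> bool" where
  "korselt \<alpha> N \<longleftrightarrow>
     (let (a1, a2) = quotient_of \<alpha> in
        \<alpha> \<noteq> of_nat N \<and>
        (\<forall>p. prime p \<and> p dvd N \<longrightarrow> (a2 * int p - a1) dvd (a2 * int N - a1)))"

definition KS :: "rat set \<Rightarrow> nat \<Rightarrow> rat set" where
  "KS A N = {\<beta> \<in> A - {0, of_nat N}. korselt \<beta> N}"

end

theory Submission
  imports Defs
begin

theorem corollary5p6:
  fixes q :: nat
  assumes "prime q"
  shows "KS {x :: rat. 0 < x \<and> x < 1} (q ^ 2) = {}"
proof (rule ccontr)
  assume "KS {x :: rat. 0 < x \<and> x < 1} (q ^ 2) \<noteq> {}"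
  then obtain b where b0: "0 < b" and b1: "b < 1" and k: "korselt b (q^2)"
    unfolding KS_def by auto
  obtain a1 a2 where qa: "quotient_of b = (a1, a2)" by (cases "quotient_of b")
  have a2p: "0 < a2" using quotient_of_denom_pos[OF qa] .
  have bd: "b = of_int a1 / of_int a2" using quotient_of_div[OF qa] .
  have "0 < (of_int a1 :: rat)" using b0 a2p bd by (simp add: zero_less_divide_iff)
  hence a1p: "0 < a1" by simp
  have "(of_int a1 :: rat) < of_int a2" using b1 a2p bd by (simp add: divide_less_eq)
  hence a12: "a1 < a2" by simp
  have q2: "q \<ge> 2" using assms prime_ge_2_nat by blast
  have "(a2 * int q - a1) dvd (a2 * int (q^2) - a1)"
    using k assms qa unfolding korselt_def by (auto simp: power2_eq_square)
  hence "(a2 * int q - a1) dvd (a2 * int (q^2) - a1 - int q * (a2 * int q - a1))"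
    by (simp add: dvd_diff)
  moreover have "a2 * int (q^2) - a1 - int q * (a2 * int q - a1) = a1 * (int q - 1)"
    by (simp add: power2_eq_square algebra_simps)
  ultimately have dv: "(a2 * int q - a1) dvd (a1 * (int q - 1))" by simp
  have pos: "0 < a1 * (int q - 1)" using a1p q2 by simp
  have "a2 * int q - a1 \<le> a1 * (int q - 1)" using zdvd_imp_le[OF dv pos] .
  moreover have "a1 * int q < a2 * int q" using a12 q2 by simp
  ultimately show False by (simp add: algebra_simps)
qed

end
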